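(* Let $q\in(0,1)$ and let $N$ be a positive integer. For any $s\in\mathbb{C}$ and any $t\in\mathbb{C}\setminus\{a+2\pi i b/\log q : a,b\in\mathbb{Z},\ a\le 0\}$, we have $$(1-q)^{-s}\zeta_q(s,t)=\sum_{m=1}^{N-1}\frac{q^{mt}}{(1-q^m)^s}+\sum_{r=0}^{\infty}\binom{r+s-1}{r}\frac{q^{N(t+r)}}{1-q^{t+r}}.$$
   Context: For $q\in(0,1)$, $[m]_q=\frac{1-q^m}{1-q}$ and $q^w=e^{w\log q}$. $\zeta_q(s,t)=\sum_{m=1}^\infty q^{mt}[m]_q^{-s}$ for $\Re(t)>0$, extended meromorphically to $\mathbb{C}^2$. For complex $s$ and integer $r\ge0$, $\binom{r+s-1}{r}=\frac{s(s+1)\cdots(s+r-1)}{r!}=\frac{\Gamma(r+s)}{r!\,\Gamma(s)}$ (equal to $1$ for $r=0$). Complex powers $(1-q^m)^{s}$ use the real logarithm of the positive number $1-q^m$. *)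

theory Defs
  imports "HOL-Complex_Analysis.Complex_Analysis"
begin

definition rpow :: "real \<Rightarrow> complex \<Rightarrow> complex" where
  "rpow x w = exp (w * complex_of_real (ln x))"

definition qint :: "real \<Rightarrow> nat \<Rightarrow> real" where
  "qint q m = (1 - q ^ m) / (1 - q)"

text \<open>The defining series of zeta_q(s,t), valid for Re t > 0.\<close>
definition zeta_q_series :: "real \<Rightarrow> complex \<Rightarrow> complex \<Rightarrow> complex" where
  "zeta_q_series q s t = (\<Sum>m. rpow q (of_nat (Suc m) * t) * rpow (qint q (Suc m)) (- s))"

definition zeta_q_poles :: "real \<Rightarrow> complex set" where
  "zeta_q_poles q = {of_int a + 2 * of_real pi * \<i> * of_int b / of_real (ln q) | a b. a \<le> 0}"

text \<open>Meromorphic continuation of zeta_q(s,t) in t (for fixed s): the value at t of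
  the function holomorphic on the complement of the pole set that agrees with the
  series on the half-plane Re t > 0 (unique by the identity theorem).\<close>
definition zeta_q :: "real \<Rightarrow> complex \<Rightarrow> complex \<Rightarrow> complex" where
  "zeta_q q s t = (THE z. \<exists>g. g holomorphic_on (- zeta_q_poles q) \<and>
      (\<forall>u. 0 < Re u \<longrightarrow> g u = zeta_q_series q s u) \<and> g t = z)"

text \<open>Generalized binomial coefficient binom(r+s-1, r) = s(s+1)...(s+r-1)/r!.\<close>
definition gbinom :: "complex \<Rightarrow> nat \<Rightarrow> complex" where
  "gbinom s r = pochhammer s r / of_nat (fact r)"

end

theory Submission
  imports Defs
begin

lemma rpow_add: "rpow x (a + b) = rpow x a * rpow x b"
  unfolding rpow_def by (simp add: distrib_right exp_add)

lemma rpow_nat_mult: "rpow x (of_nat n * w) = rpow x w ^ n"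
  unfolding rpow_def by (simp add: mult.assoc exp_of_nat_mult)

lemma norm_rpow: "norm (rpow x w) = exp (Re w * ln x)"
  unfolding rpow_def by (simp add: norm_exp_eq_Re)

lemma rpow_one: "0 < x \<Longrightarrow> rpow x 1 = of_real x"
  unfolding rpow_def by (simp add: exp_of_real)

lemma rpow_of_nat: "0 < x \<Longrightarrow> rpow x (of_nat n) = of_real x ^ n"
  using rpow_nat_mult[of x n 1] by (simp add: rpow_one)

lemma rpow_minus: "rpow x (- w) = inverse (rpow x w)"
  unfolding rpow_def by (simp add: exp_minus)

lemma rpow_nonzero: "rpow x w \<noteq> 0"
  unfolding rpow_def by simp

lemma rpow_div: "0 < x \<Longrightarrow> 0 < y \<Longrightarrow> rpow (x / y) w = rpow x w / rpow y w"
  unfolding rpow_def by (simp add: ln_div right_diff_distrib exp_diff)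

lemma gbinom_alt: "gbinom s r = ((- s) gchoose r) * (-1) ^ r"
  unfolding gbinom_def gbinomial_pochhammer
  by (simp add: field_simps flip: power_mult_distrib)

lemma binom_sums:
  fixes x :: real
  assumes "0 \<le> x" "x < 1"
  shows "(\<lambda>r. gbinom s r * of_real x ^ r) sums rpow (1 - x) (- s)"
proof -
  have n: "norm (- of_real x :: complex) < 1" using assms by simp
  have "(\<lambda>r. ((- s) gchoose r) * (- of_real x) ^ r) sums (1 + - of_real x) powr (- s)"
    by (rule gen_binomial_complex[OF n])
  moreover have "(1 + - of_real x :: complex) powr (- s) = rpow (1 - x) (- s)"
    using assms unfolding rpow_def powr_def
    by (simp flip: Ln_of_real)
  moreover have "((- s) gchoose r) * (- of_real x) ^ r = gbinom s r * of_real x ^ r" for r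
    unfolding gbinom_alt by (simp add: power_minus')
  ultimately show ?thesis by simp
qed

lemma pochhammer_nonneg0: "0 \<le> (x::real) \<Longrightarrow> 0 \<le> pochhammer x n"
  by (induction n) (auto simp: pochhammer_Suc)

lemma norm_pochhammer_le: "norm (pochhammer (s::complex) r) \<le> pochhammer (norm s) r"
proof (induction r)
  case 0 then show ?case by simp
next
  case (Suc r)
  have "norm (pochhammer s (Suc r)) = norm (pochhammer s r) * norm (s + of_nat r)"
    by (simp add: pochhammer_Suc norm_mult)
  also have "\<dots> \<le> pochhammer (norm s) r * (norm s + of_nat r)"
    apply (rule mult_mono[OF Suc.IH])
    using norm_triangle_ineq[of s "of_nat r"] by (auto simp: pochhammer_nonneg0)
  finally show ?case by (simp add: pochhammer_Suc)
qed

lemma summable_gbinom: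
  fixes q :: real
  assumes "0 \<le> q" "q < 1"
  shows "summable (\<lambda>r. norm (gbinom s r) * q ^ r)"
proof -
  have "(\<lambda>r. gbinom (of_real (norm s)) r * of_real q ^ r) sums rpow (1 - q) (- of_real (norm s))"
    by (rule binom_sums[OF assms])
  hence "summable (\<lambda>r. gbinom (of_real (norm s)) r * of_real q ^ r)" by (rule sums_summable)
  moreover have "gbinom (of_real (norm s)) r * of_real q ^ r = of_real (pochhammer (norm s) r / fact r * q ^ r)" for r
    unfolding gbinom_def by (simp add: pochhammer_of_real)
  ultimately have "summable (\<lambda>r. pochhammer (norm s) r / fact r * q ^ r)"
    using summable_of_real_iff by (metis (no_types, lifting) ext)
  moreover have "norm (norm (gbinom s r) * q ^ r) \<le> pochhammer (norm s) r / fact r * q ^ r" for r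
    unfolding gbinom_def using assms norm_pochhammer_le[of s r]
    by (auto simp: norm_divide intro!: mult_right_mono divide_right_mono)
  ultimately show ?thesis by (rule summable_comparison_test'[where N=0])
qed


lemma poles_char:
  fixes q :: real
  assumes "0 < q" "q < 1"
  shows "zeta_q_poles q = Re -` (\<int> \<inter> {..0}) \<inter> (\<lambda>z. Im z * ln q / (2 * pi)) -` \<int>"
proof -
  have lq: "ln q < 0" using assms by simp
  have Re_e: "Re (of_int a + 2 * of_real pi * \<i> * of_int b / of_real (ln q)) = of_int a"
    and Im_e: "Im (of_int a + 2 * of_real pi * \<i> * of_int b / of_real (ln q)) = 2 * pi * of_int b / ln q"
    for a b :: int
    by (simp_all add: Re_divide Im_divide power2_eq_square)
  show ?thesis
  proof (intro equalityI subsetI)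
    fix z assume "z \<in> zeta_q_poles q"
    then obtain a b where z: "z = of_int a + 2 * of_real pi * \<i> * of_int b / of_real (ln q)" "a \<le> 0"
      unfolding zeta_q_poles_def by blast
    show "z \<in> Re -` (\<int> \<inter> {..0}) \<inter> (\<lambda>z. Im z * ln q / (2 * pi)) -` \<int>"
      using z lq by (simp add: Re_e Im_e)
  next
    fix z assume "z \<in> Re -` (\<int> \<inter> {..0}) \<inter> (\<lambda>z. Im z * ln q / (2 * pi)) -` \<int>"
    then obtain a b where a: "Re z = of_int a" and b: "Im z * ln q / (2 * pi) = of_int b" and "Re z \<le> 0"
      by (auto elim!: Ints_cases)
    hence "a \<le> 0" by simp
    moreover have "z = of_int a + 2 * of_real pi * \<i> * of_int b / of_real (ln q)"
      using a b lq by (simp add: complex_eq_iff Re_e Im_e field_simps)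
    ultimately show "z \<in> zeta_q_poles q" unfolding zeta_q_poles_def by blast
  qed
qed

lemma poles_closed:
  fixes q :: real
  assumes "0 < q" "q < 1"
  shows "closed (zeta_q_poles q)"
  unfolding poles_char[OF assms]
  by (intro closed_Int closed_vimage closed_atMost closed_Ints continuous_intros) auto

lemma poles_countable: "countable (zeta_q_poles q)"
proof -
  have "zeta_q_poles q \<subseteq> (\<lambda>(a::int, b::int). of_int a + 2 * of_real pi * \<i> * of_int b / of_real (ln q)) ` UNIV"
    unfolding zeta_q_poles_def by auto
  thus ?thesis by (rule countable_subset) simp
qed

lemma poles_Re: "z \<in> zeta_q_poles q \<Longrightarrow> Re z \<le> 0"
  unfolding zeta_q_poles_def by (auto simp: Re_divide)

lemma compl_poles_open: "0 < q \<Longrightarrow> q < 1 \<Longrightarrow> open (- zeta_q_poles q)"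
  using poles_closed by (simp add: open_Compl)

lemma compl_poles_connected: "connected (- zeta_q_poles q)"
proof -
  have "connected (UNIV - zeta_q_poles q)"
    by (rule connected_open_diff_countable) (auto simp: poles_countable)
  thus ?thesis by (simp add: Compl_eq_Diff_UNIV)
qed

lemma denom_nonzero:
  fixes q :: real
  assumes "0 < q" "q < 1" "t \<notin> zeta_q_poles q"
  shows "rpow q (t + of_nat r) \<noteq> 1"
proof
  assume "rpow q (t + of_nat r) = 1"
  then obtain n :: int where h: "Re ((t + of_nat r) * of_real (ln q)) = 0"
     "Im ((t + of_nat r) * of_real (ln q)) = of_int (2 * n) * pi"
    unfolding rpow_def exp_eq_1 by blast
  have lq: "ln q < 0" using assms by simp
  have "Re t = - real r" using h(1) lq by simp
  moreover have "Im t * ln q / (2 * pi) = of_int n" using h(2) lq by simp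
  ultimately have "t \<in> zeta_q_poles q"
    unfolding poles_char[OF assms(1,2)] by (auto intro!: Ints_minus)
  with assms show False by simp
qed


definition tm :: "real \<Rightarrow> complex \<Rightarrow> nat \<Rightarrow> nat \<Rightarrow> complex \<Rightarrow> complex" where
  "tm q s N r u = gbinom s r * rpow q (of_nat N * (u + of_nat r)) / (1 - rpow q (u + of_nat r))"

lemma tm_holo:
  assumes "0 < q" "q < 1"
  shows "tm q s N r holomorphic_on (- zeta_q_poles q)"
proof -
  have "\<And>u. u \<in> - zeta_q_poles q \<Longrightarrow> 1 - exp ((u + of_nat r) * of_real (ln q)) \<noteq> 0"
    using denom_nonzero[OF assms] unfolding rpow_def by force
  thus ?thesis unfolding tm_def[abs_def] rpow_def
    by (intro holomorphic_intros) auto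
qed

lemma exp_ln_split: "0 < q \<Longrightarrow> exp ((c + real r) * ln q) = exp (c * ln q) * q ^ r"
proof -
  assume q: "0 < q"
  have "exp (real r * ln q) = q ^ r" using q by (simp add: exp_of_nat_mult)
  thus ?thesis by (simp add: distrib_right exp_add)
qed

lemma tm_bound:
  fixes q :: real
  assumes q: "0 < q" "q < 1" and N: "0 < N"
  shows "\<exists>d h. 0 < d \<and> summable h \<and>
     (\<forall>\<^sub>F r in sequentially. \<forall>y\<in>ball x d \<inter> - zeta_q_poles q. norm (tm q s N r y) \<le> h r)"
proof -
  define c where "c = Re x - 1"
  define K where "K = exp (c * ln q)"
  have lq: "ln q < 0" using q by simp
  have "(\<lambda>r. K * q ^ r) \<longlonglongrightarrow> 0"
    using q by (intro tendsto_mult_right_zero LIMSEQ_power_zero) auto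
  hence ev1: "\<forall>\<^sub>F r in sequentially. K * q ^ r < 1/2"
    by (rule order_tendstoD) simp
  have ev2: "\<forall>\<^sub>F r in sequentially. - c \<le> real r"
    using eventually_ge_at_top[of "nat \<lceil>- c\<rceil>"]
    by (rule eventually_mono) linarith
  have bound: "norm (tm q s N r y) \<le> 2 * K * (norm (gbinom s r) * q ^ r)"
    if r1: "K * q ^ r < 1/2" and r2: "- c \<le> real r" and y: "y \<in> ball x 1" for r y
  proof -
    have "Re y > c" using y unfolding c_def dist_complex_def
      using abs_Re_le_cmod[of "x - y"] by (auto simp: dist_norm)
    define a where "a = Re y + real r"
    have a0: "0 \<le> a" using \<open>Re y > c\<close> r2 unfolding a_def by linarith
    have A: "exp (a * ln q) \<le> K * q ^ r"
    proof -
      have "exp (a * ln q) \<le> exp ((c + real r) * ln q)"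
        using \<open>Re y > c\<close> lq unfolding a_def by (subst exp_le_cancel_iff, intro mult_right_mono_neg) auto
      thus ?thesis using exp_ln_split[OF q(1)] unfolding K_def by simp
    qed
    have n1: "norm (rpow q (y + of_nat r)) = exp (a * ln q)"
      unfolding norm_rpow a_def by simp
    have n2: "norm (rpow q (of_nat N * (y + of_nat r))) \<le> exp (a * ln q)"
    proof -
      have "real N * a * ln q \<le> a * ln q"
        using N a0 lq by (intro mult_right_mono_neg) (auto simp: mult_le_cancel_right1)
      thus ?thesis unfolding norm_rpow a_def by simp
    qed
    have d: "norm (1 - rpow q (y + of_nat r)) \<ge> 1/2"
    proof -
      have "norm (1 - rpow q (y + of_nat r)) \<ge> 1 - norm (rpow q (y + of_nat r))"
        using norm_triangle_ineq2[of 1 "rpow q (y + of_nat r)"] by simp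
      thus ?thesis using n1 A r1 by linarith
    qed
    have "norm (tm q s N r y) = norm (gbinom s r) * norm (rpow q (of_nat N * (y + of_nat r)))
            / norm (1 - rpow q (y + of_nat r))"
      unfolding tm_def by (simp add: norm_mult norm_divide)
    also have "\<dots> \<le> norm (gbinom s r) * (K * q ^ r) / (1/2)"
      using n2 A d q unfolding K_def by (intro frac_le mult_left_mono) auto
    also have "\<dots> = 2 * K * (norm (gbinom s r) * q ^ r)" by simp
    finally show ?thesis .
  qed
  have "summable (\<lambda>r. 2 * K * (norm (gbinom s r) * q ^ r))"
    using summable_gbinom[of q s] q by (intro summable_mult) auto
  moreover have "\<forall>\<^sub>F r in sequentially. \<forall>y\<in>ball x 1 \<inter> - zeta_q_poles q.
       norm (tm q s N r y) \<le> 2 * K * (norm (gbinom s r) * q ^ r)"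
    using eventually_conj[OF ev1 ev2] by (rule eventually_mono) (auto intro: bound)
  ultimately show ?thesis by (intro exI[of _ 1] exI[of _ "\<lambda>r. 2 * K * (norm (gbinom s r) * q ^ r)"]) simp
qed

lemma tm_series:
  fixes q :: real
  assumes q: "0 < q" "q < 1" and N: "0 < N"
  shows "\<exists>g. g holomorphic_on (- zeta_q_poles q) \<and>
           (\<forall>x \<in> - zeta_q_poles q. (\<lambda>r. tm q s N r x) sums g x)"
proof -
  let ?S = "- zeta_q_poles q"
  have S: "open ?S" using compl_poles_open q by blast
  have "\<exists>g g'. \<forall>x \<in> ?S. ((\<lambda>n. tm q s N n x) sums g x) \<and> ((\<lambda>n. deriv (tm q s N n) x) sums g' x)
           \<and> (g has_field_derivative g' x) (at x)"
  proof (rule series_and_derivative_comparison_local[OF S])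
    fix n x assume x: "x \<in> ?S"
    show "(tm q s N n has_field_derivative deriv (tm q s N n) x) (at x)"
      by (rule holomorphic_derivI[OF tm_holo[OF q] S x])
  next
    fix x assume "x \<in> ?S"
    show "\<exists>d h. 0 < d \<and> summable h \<and> (\<forall>\<^sub>F n in sequentially. \<forall>y\<in>ball x d \<inter> ?S. norm (tm q s N n y) \<le> h n)"
      by (rule tm_bound[OF q N])
  qed
  then obtain g g' where gg: "\<forall>x \<in> ?S. ((\<lambda>n. tm q s N n x) sums g x) \<and>
           (g has_field_derivative g' x) (at x)" by blast
  have "g holomorphic_on ?S"
    using gg S by (auto simp: holomorphic_on_open)
  with gg show ?thesis by blast
qed


lemma binom_m:
  fixes q :: real
  assumes q: "0 < q" "q < 1" and m: "1 \<le> m"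
  shows "(\<lambda>r. gbinom s r * rpow q (t + of_nat r) ^ m) sums (rpow q (of_nat m * t) * rpow (1 - q ^ m) (- s))"
proof -
  have qm: "0 \<le> q ^ m" "q ^ m < 1" using q m by (auto simp: power_less_one_iff)
  have eq: "rpow q (t + of_nat r) ^ m = rpow q (of_nat m * t) * of_real (q ^ m) ^ r" for r
  proof -
    have "rpow q (t + of_nat r) ^ m = rpow q (of_nat m * t + of_nat (m * r))"
      by (simp add: rpow_nat_mult[symmetric] algebra_simps)
    also have "\<dots> = rpow q (of_nat m * t) * of_real (q ^ m) ^ r"
      using q rpow_of_nat[OF q(1), of "m * r"] by (simp add: rpow_add power_mult)
    finally show ?thesis .
  qed
  show ?thesis unfolding eq
    using sums_mult[OF binom_sums[OF qm, of s], of "rpow q (of_nat m * t)"]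
    by (simp add: ac_simps)
qed

lemma zeta_series_eq:
  fixes q :: real
  assumes q: "0 < q" "q < 1" and u: "0 < Re u"
  shows "zeta_q_series q s u = rpow (1 - q) s * (\<Sum>r. tm q s 1 r u)"
proof -
  have lq: "ln q < 0" using q by simp
  define F where "F = (\<lambda>(r, m). gbinom s r * rpow q (u + of_nat r) ^ Suc m)"
  define b where "b = (\<lambda>m. rpow q (of_nat (Suc m) * u) * rpow (1 - q ^ Suc m) (- s))"
  define e where "e = exp (Re u * ln q)"
  have e: "0 < e" "e < 1" unfolding e_def using u lq by (auto simp: mult_pos_neg)
  define a where "a = (\<lambda>r. norm (rpow q (u + of_nat r)))"
  have a_eq: "a r = e * q ^ r" for r
    unfolding a_def e_def norm_rpow using exp_ln_split[OF q(1), of "Re u" r] by simp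
  have a_pos: "0 < a r" "a r \<le> e" for r
    unfolding a_eq using q e by (auto intro!: mult_left_le power_le_one)
  have a1: "a r < 1" for r using a_pos[of r] e by linarith
  define G where "G = (\<lambda>r. norm (gbinom s r) * a r / (1 - a r))"
  have Fr: "(\<lambda>m. F (r, m)) sums tm q s 1 r u" for r
  proof -
    have n: "norm (rpow q (u + of_nat r)) < 1" using a1[of r] unfolding a_def .
    have "(\<lambda>m. gbinom s r * rpow q (u + of_nat r) * rpow q (u + of_nat r) ^ m) sums
          (gbinom s r * rpow q (u + of_nat r) * (1 / (1 - rpow q (u + of_nat r))))"
      by (rule sums_mult[OF geometric_sums[OF n]])
    thus ?thesis unfolding F_def tm_def by (simp add: ac_simps)
  qed
  have Fnr: "(\<lambda>m. norm (F (r, m))) sums G r" for r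
  proof -
    have n: "norm (a r) < 1" using a1[of r] a_pos[of r] by simp
    have "(\<lambda>m. norm (gbinom s r) * a r * a r ^ m) sums
          (norm (gbinom s r) * a r * (1 / (1 - a r)))"
      by (rule sums_mult[OF geometric_sums[OF n]])
    thus ?thesis unfolding F_def G_def a_def by (simp add: norm_mult norm_power ac_simps)
  qed
  have Fm: "(\<lambda>r. F (r, m)) sums b m" for m
    unfolding F_def b_def using binom_m[OF q, of "Suc m" s u] by simp
  have G_le: "norm (G r) \<le> e / (1 - e) * (norm (gbinom s r) * q ^ r)" for r
  proof -
    have "a r / (1 - a r) \<le> e * q ^ r / (1 - e)"
      using a_pos[of r] a1[of r] e by (intro frac_le) (auto simp: a_eq)
    hence "norm (gbinom s r) * (a r / (1 - a r)) \<le> norm (gbinom s r) * (e * q ^ r / (1 - e))"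
      by (intro mult_left_mono) auto
    moreover have "0 \<le> G r" unfolding G_def using a_pos[of r] a1[of r] by auto
    moreover have "G r = norm (gbinom s r) * (a r / (1 - a r))" unfolding G_def by simp
    moreover have "e / (1 - e) * (norm (gbinom s r) * q ^ r) = norm (gbinom s r) * (e * q ^ r / (1 - e))"
      by simp
    ultimately have "G r \<le> e / (1 - e) * (norm (gbinom s r) * q ^ r)" by linarith
    with \<open>0 \<le> G r\<close> show ?thesis by simp
  qed
  have sG: "summable (\<lambda>r. norm (G r))"
  proof (rule summable_comparison_test'[where N=0])
    show "summable (\<lambda>r. e / (1 - e) * (norm (gbinom s r) * q ^ r))"
      using q by (intro summable_mult summable_gbinom) auto
    show "norm (norm (G r)) \<le> e / (1 - e) * (norm (gbinom s r) * q ^ r)" for r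
      using G_le[of r] by simp
  qed
  have "(\<lambda>p. norm (F p)) summable_on Sigma UNIV (\<lambda>_. UNIV)"
  proof (rule summable_on_SigmaI[where g = G])
    show "((\<lambda>y. norm (F (x, y))) has_sum G x) UNIV" for x
      by (rule sums_nonneg_imp_has_sum[OF Fnr]) simp
    show "G summable_on UNIV" by (rule norm_summable_imp_summable_on[OF sG])
    show "0 \<le> norm (F (x, y))" for x y by simp
  qed
  hence Fsum: "F summable_on UNIV \<times> UNIV"
    by (rule abs_summable_summable)
  define I where "I = infsum F (UNIV \<times> UNIV)"
  have FI: "(F has_sum I) (UNIV \<times> UNIV)" unfolding I_def using Fsum by (rule has_sum_infsum)
  have "((\<lambda>r. tm q s 1 r u) has_sum I) UNIV"
  proof (rule has_sum_Sigma'[where f = F])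
    show "(F has_sum I) (Sigma UNIV (\<lambda>_. UNIV))" using FI by simp
    show "((\<lambda>m. F (r, m)) has_sum tm q s 1 r u) UNIV" for r
      by (rule norm_summable_imp_has_sum[OF sums_summable[OF Fnr] Fr])
  qed
  hence S1: "(\<lambda>r. tm q s 1 r u) sums I" by (rule has_sum_imp_sums)
  have "(b has_sum I) UNIV"
  proof (rule has_sum_Sigma'[where f = "\<lambda>(m, r). F (r, m)"])
    show "((\<lambda>(m, r). F (r, m)) has_sum I) (Sigma UNIV (\<lambda>_. UNIV))"
      using has_sum_swap[THEN iffD1, OF FI] by simp
    show "((\<lambda>r. (\<lambda>(m, r). F (r, m)) (m, r)) has_sum b m) UNIV" for m
    proof -
      have sm: "summable (\<lambda>r. norm (F (r, m)))"
      proof (rule summable_comparison_test'[where N=0])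
        show "summable (\<lambda>r. e * (norm (gbinom s r) * q ^ r))"
          using q by (intro summable_mult summable_gbinom) auto
        show "norm (norm (F (r, m))) \<le> e * (norm (gbinom s r) * q ^ r)" for r
        proof -
          have "a r ^ m \<le> 1" using a_pos[of r] a1[of r] by (intro power_le_one) auto
          hence "a r * a r ^ m \<le> a r" using a_pos[of r] by (intro mult_left_le) auto
          hence "a r ^ Suc m \<le> a r" by simp
          hence "norm (gbinom s r) * a r ^ Suc m \<le> norm (gbinom s r) * (e * q ^ r)"
            using a_eq[of r] by (intro mult_left_mono) auto
          thus ?thesis unfolding F_def a_def by (simp add: norm_mult norm_power ac_simps)
        qed
      qed
      show ?thesis using norm_summable_imp_has_sum[OF sm Fm] by simp
    qed
  qed
  hence S2: "b sums I" by (rule has_sum_imp_sums)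
  have "rpow q (of_nat (Suc m) * u) * rpow (qint q (Suc m)) (- s) = rpow (1 - q) s * b m" for m
  proof -
    have "0 < 1 - q ^ Suc m" using q power_Suc_less_one[of q m] by simp
    hence "rpow (qint q (Suc m)) (- s) = rpow (1 - q ^ Suc m) (- s) / rpow (1 - q) (- s)"
      unfolding qint_def using q by (simp add: rpow_div)
    thus ?thesis unfolding b_def rpow_minus[of "1 - q"] by (simp add: field_simps rpow_nonzero)
  qed
  hence "zeta_q_series q s u = (\<Sum>m. rpow (1 - q) s * b m)"
    unfolding zeta_q_series_def by simp
  also have "\<dots> = rpow (1 - q) s * I" using sums_unique[OF sums_mult[OF S2]] by simp
  also have "I = (\<Sum>r. tm q s 1 r u)" using sums_unique[OF S1] .
  finally show ?thesis .
qed


lemma geom_diff: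
  fixes x :: complex
  assumes "x \<noteq> 1"
  shows "x / (1 - x) - x ^ Suc n / (1 - x) = (\<Sum>m = 1..n. x ^ m)"
proof (induction n)
  case 0 then show ?case by simp
next
  case (Suc n)
  have d: "1 - x \<noteq> 0" using assms by simp
  have "x / (1 - x) - x ^ Suc (Suc n) / (1 - x)
        = (x / (1 - x) - x ^ Suc n / (1 - x)) + (x ^ Suc n - x ^ Suc (Suc n)) / (1 - x)"
    by (simp add: diff_divide_distrib)
  also have "(x ^ Suc n - x ^ Suc (Suc n)) / (1 - x) = x ^ Suc n"
    using d by (simp add: field_simps)
  also have "x / (1 - x) - x ^ Suc n / (1 - x) = (\<Sum>m = 1..n. x ^ m)" by (rule Suc.IH)
  finally show ?case by (simp add: sum.cl_ivl_Suc)
qed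

theorem lemma2p1:
  fixes q :: real and N :: nat and s t :: complex
  assumes "0 < q" and "q < 1" and "0 < N"
    and "t \<notin> zeta_q_poles q"
  shows "(\<lambda>r. gbinom s r * rpow q (of_nat N * (t + of_nat r)) / (1 - rpow q (t + of_nat r)))
           sums (rpow (1 - q) (- s) * zeta_q q s t
                 - (\<Sum>m = 1..N - 1. rpow q (of_nat m * t) / rpow (1 - q ^ m) s))"
proof -
  have q: "0 < q" "q < 1" using assms by auto
  let ?S = "- zeta_q_poles q"
  have tS: "t \<in> ?S" using assms by simp
  obtain G1 where G1h: "G1 holomorphic_on ?S" and G1s: "\<forall>x \<in> ?S. (\<lambda>r. tm q s 1 r x) sums G1 x"
    using tm_series[OF q, of 1 s] by auto
  define g where "g = (\<lambda>u. rpow (1 - q) s * G1 u)"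
  have gh: "g holomorphic_on ?S" unfolding g_def using G1h by (intro holomorphic_intros)
  have half: "g u = zeta_q_series q s u" if "0 < Re u" for u
  proof -
    have "u \<in> ?S" using that poles_Re[of u q] by auto
    hence "G1 u = (\<Sum>r. tm q s 1 r u)" using G1s sums_unique by blast
    thus ?thesis unfolding g_def using zeta_series_eq[OF q that] by simp
  qed
  have Z: "zeta_q q s t = g t"
    unfolding zeta_q_def
  proof (rule the_equality)
    show "\<exists>g'. g' holomorphic_on ?S \<and> (\<forall>u. 0 < Re u \<longrightarrow> g' u = zeta_q_series q s u) \<and> g' t = g t"
      using gh half by blast
  next
    fix z assume "\<exists>g'. g' holomorphic_on ?S \<and> (\<forall>u. 0 < Re u \<longrightarrow> g' u = zeta_q_series q s u) \<and> g' t = z"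
    then obtain g' where g': "g' holomorphic_on ?S" "\<forall>u. 0 < Re u \<longrightarrow> g' u = zeta_q_series q s u" "g' t = z"
      by blast
    have "g' t = g t"
    proof (rule analytic_continuation_open[of "{u. 0 < Re u}" ?S g' g t])
      show "open {u. 0 < Re u}" by (rule open_halfspace_Re_gt)
      show "open ?S" using compl_poles_open[OF q] .
      show "{u. 0 < Re u} \<noteq> {}" by (auto intro!: exI[of _ 1])
      show "connected ?S" by (rule compl_poles_connected)
      show "{u. 0 < Re u} \<subseteq> ?S" using poles_Re by fastforce
      show "g' holomorphic_on ?S" by (rule g'(1))
      show "g holomorphic_on ?S" by (rule gh)
      show "g' u = g u" if "u \<in> {u. 0 < Re u}" for u using that g'(2) half by simp
      show "t \<in> ?S" by (rule tS)
    qed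
    thus "z = g t" using g'(3) by simp
  qed
  define x where "x = (\<lambda>r. rpow q (t + of_nat r))"
  have x1: "x r \<noteq> 1" for r unfolding x_def using denom_nonzero[OF q assms(4)] .
  define D where "D = (\<lambda>r. \<Sum>m = 1..N - 1. gbinom s r * x r ^ m)"
  have Ds: "D sums (\<Sum>m = 1..N - 1. rpow q (of_nat m * t) * rpow (1 - q ^ m) (- s))"
  proof -
    have "\<And>m. m \<in> {1..N - 1} \<Longrightarrow> (\<lambda>r. gbinom s r * rpow q (t + of_nat r) ^ m) sums
            (rpow q (of_nat m * t) * rpow (1 - q ^ m) (- s))"
      by (rule binom_m[OF q]) simp
    from sums_sum[OF this] show ?thesis unfolding D_def x_def .
  qed
  have eq: "gbinom s r * rpow q (of_nat N * (t + of_nat r)) / (1 - rpow q (t + of_nat r))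
            = tm q s 1 r t - D r" for r
  proof -
    obtain n where n: "N = Suc n" using assms(3) by (cases N) auto
    have "x r / (1 - x r) - x r ^ N / (1 - x r) = (\<Sum>m = 1..N - 1. x r ^ m)"
      using geom_diff[OF x1[of r], of n] n by simp
    hence "gbinom s r * (x r / (1 - x r) - x r ^ N / (1 - x r)) = gbinom s r * (\<Sum>m = 1..N - 1. x r ^ m)"
      by (simp only:)
    hence h: "gbinom s r * (x r / (1 - x r)) - gbinom s r * (x r ^ N / (1 - x r)) = D r"
      unfolding D_def right_diff_distrib sum_distrib_left .
    have t1: "tm q s 1 r t = gbinom s r * (x r / (1 - x r))"
      unfolding tm_def x_def by simp
    have tN: "gbinom s r * rpow q (of_nat N * (t + of_nat r)) / (1 - rpow q (t + of_nat r))
        = gbinom s r * (x r ^ N / (1 - x r))"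
      unfolding x_def rpow_nat_mult by simp
    show ?thesis unfolding tN t1 h[symmetric] by (simp add: diff_diff_eq2)
  qed
  have "(\<lambda>r. tm q s 1 r t - D r) sums (G1 t - (\<Sum>m = 1..N - 1. rpow q (of_nat m * t) * rpow (1 - q ^ m) (- s)))"
    using G1s tS Ds by (intro sums_diff) auto
  moreover have "rpow (1 - q) (- s) * zeta_q q s t = G1 t"
    unfolding Z g_def rpow_minus by (simp add: rpow_nonzero)
  moreover have "rpow q (of_nat m * t) * rpow (1 - q ^ m) (- s) = rpow q (of_nat m * t) / rpow (1 - q ^ m) s" for m
    by (simp add: rpow_minus divide_inverse)
  ultimately show ?thesis unfolding eq by simp
qed

end
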